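(* Let $n,m\ge1$ be fixed and let $\alpha>0$, $\beta\ge0$ be fixed constants. There exists a constant $c$ (depending on $\alpha,\beta$ but independent of $N$) with the following property. Let $N\ge1$ and let $\mathbf A_i,\mathbf Q_i\in\mathbb R^{n\times n}$, $\mathbf B_i,\mathbf S_i\in\mathbb R^{n\times m}$, $\mathbf R_i\in\mathbb R^{m\times m}$ ($1\le i\le N$), $\mathbf T\in\mathbb R^{n\times n}$, with $\mathbf Q_i,\mathbf R_i,\mathbf T$ symmetric, satisfy: the smallest eigenvalues of $\mathbf T$ and of each $\begin{pmatrix}\mathbf Q_i&\mathbf S_i\\ \mathbf S_i^{\mathsf T}&\mathbf R_i\end{pmatrix}$ exceed $\alpha$; $\|\mathbf A_i\|_\infty\le1/4$, $\|\mathbf A_i^{\mathsf T}\|_\infty\le1/4$; and all of these matrices have norm at most $\beta$. Suppose $\mathbf D_{1:N}$ is invertible with $\|\mathbf D_{1:N}^{-1}\|_\infty\le2$. Then for every $\mathbf y=(\mathbf y_{1},\mathbf y_2,\mathbf y_3,\mathbf y_4,\mathbf y_5)$ with $\mathbf y_1=(\mathbf y_{1i})_{i=1}^N$, $\mathbf y_3=(\mathbf y_{3i})_{i=1}^N$ in $(\mathbb R^n)^N$, $\mathbf y_2,\mathbf y_4\in\mathbb R^n$, $\mathbf y_5=(\mathbf y_{5i})_{i=1}^N\in(\mathbb R^m)^N$, the solution $(\mathbf X,\mathbf U)$ of the quadratic program $$\min\ \tfrac12\mathcal Q(\mathbf X,\mathbf U)+\mathcal L(\mathbf X,\mathbf U)\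 \text{ s.t. }\ \sum_{j=1}^ND_{ij}\mathbf X_j=\mathbf A_i\mathbf X_i+\mathbf B_i\mathbf U_i+\mathbf y_{1i}\ (1\le i\le N),\quad \mathbf X_{N+1}=\sum_{j=1}^N\omega_j(\mathbf A_j\mathbf X_j+\mathbf B_j\mathbf U_j)+\mathbf y_2,$$ where $\mathcal Q(\mathbf X,\mathbf U)=\mathbf X_{N+1}^{\mathsf T}\mathbf T\mathbf X_{N+1}+\sum_{i=1}^N\omega_i(\mathbf X_i^{\mathsf T}\mathbf Q_i\mathbf X_i+2\mathbf X_i^{\mathsf T}\mathbf S_i\mathbf U_i+\mathbf U_i^{\mathsf T}\mathbf R_i\mathbf U_i)$ and $\mathcal L(\mathbf X,\mathbf U)=\mathbf y_4^{\mathsf T}\mathbf X_{N+1}-\sum_{i=1}^N\omega_i(\mathbf y_{3i}^{\mathsf T}\mathbf X_i+\mathbf y_{5i}^{\mathsf T}\mathbf U_i)$, satisfies $\|\mathbf X\|_\omega\le c\|\mathbf y\|_\infty$ and $\|\mathbf U\|_\omega\le c\|\mathbf y\|_\infty$.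
   Context: Unknowns: $\mathbf X=(\mathbf X_1,\dots,\mathbf X_{N+1})$, $\mathbf X_i\in\mathbb R^n$, and $\mathbf U=(\mathbf U_1,\dots,\mathbf U_N)$, $\mathbf U_i\in\mathbb R^m$. $-1<\tau_1<\dots<\tau_N<1$ are the $N$ Gauss abscissas (roots of the degree-$N$ Legendre polynomial), $\omega_1,\dots,\omega_N>0$ the Gauss weights, $\tau_0=-1$. $D_{ij}=\dot L_j(\tau_i)$ ($1\le i\le N$, $0\le j\le N$) with $L_j(\tau)=\prod_{k=0,k\ne j}^N\frac{\tau-\tau_k}{\tau_j-\tau_k}$ and $\mathbf D_{1:N}=(D_{ij})_{1\le i,j\le N}$. Matrix $\|\cdot\|_\infty$ is the largest absolute row sum. $\|\mathbf X\|_\omega^2=|\mathbf X_{N+1}|^2+\sum_{i=1}^N\omega_i|\mathbf X_i|^2$, $\|\mathbf U\|_\omega^2=\sum_{i=1}^N\omega_i|\mathbf U_i|^2$, and $\|\mathbf y\|_\infty$ is the maximum Euclidean norm of the $\mathbb R^n$- or $\mathbb R^m$-blocks of $\mathbf y$. (In the paper the matrices come from linearizing the control problem along its optimal solution, so they are bounded independently of $N$, and the eigenvalue and norm conditions are assumptions (A2),(A3),(P1).) *)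

theory Defs
  imports "HOL-Analysis.Analysis" "HOL-Computational_Algebra.Polynomial"
begin

text \<open>Legendre polynomials via Bonnet's recurrence
  (k+1) P_(k+1) = (2k+1) x P_k - k P_(k-1).\<close>
fun legendre :: "nat \<Rightarrow> real poly" where
  "legendre 0 = 1"
| "legendre (Suc 0) = [:0, 1:]"
| "legendre (Suc (Suc k)) =
     smult (1 / (real k + 2))
       (smult (2 * real k + 3) ([:0, 1:] * legendre (Suc k)) - smult (real k + 1) (legendre k))"

definition gauss_nodes :: "nat \<Rightarrow> (nat \<Rightarrow> real) \<Rightarrow> bool" where
  "gauss_nodes N tau \<longleftrightarrow>
     (\<forall>i j. 1 \<le> i \<longrightarrow> i < j \<longrightarrow> j \<le> N \<longrightarrow> tau i < tau j) \<and>
     tau ` {1..N} = {x. poly (legendre N) x = 0}"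

definition gauss_weights :: "nat \<Rightarrow> (nat \<Rightarrow> real) \<Rightarrow> (nat \<Rightarrow> real) \<Rightarrow> bool" where
  "gauss_weights N tau w \<longleftrightarrow>
     (\<forall>i\<in>{1..N}. w i = integral {-1..1}
        (\<lambda>t. \<Prod>k\<in>{1..N} - {i}. (t - tau k) / (tau i - tau k)))"

definition ext_nodes :: "(nat \<Rightarrow> real) \<Rightarrow> nat \<Rightarrow> real" where
  "ext_nodes tau k = (if k = 0 then -1 else tau k)"

definition lagrange_basis :: "nat \<Rightarrow> (nat \<Rightarrow> real) \<Rightarrow> nat \<Rightarrow> real poly" where
  "lagrange_basis N tau j =
     (\<Prod>k\<in>{0..N} - {j}. smult (1 / (ext_nodes tau j - ext_nodes tau k)) [:- ext_nodes tau k, 1:])"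

definition Dmat :: "nat \<Rightarrow> (nat \<Rightarrow> real) \<Rightarrow> nat \<Rightarrow> nat \<Rightarrow> real" where
  "Dmat N tau i j = poly (pderiv (lagrange_basis N tau j)) (tau i)"

definition infnorm_N :: "nat \<Rightarrow> (nat \<Rightarrow> nat \<Rightarrow> real) \<Rightarrow> real" where
  "infnorm_N N M = Max ((\<lambda>i. \<Sum>j\<in>{1..N}. \<bar>M i j\<bar>) ` {1..N})"

definition D_inv_bound :: "nat \<Rightarrow> (nat \<Rightarrow> real) \<Rightarrow> real \<Rightarrow> bool" where
  "D_inv_bound N tau b \<longleftrightarrow>
     (\<exists>E. (\<forall>i\<in>{1..N}. \<forall>j\<in>{1..N}.
            (\<Sum>k\<in>{1..N}. Dmat N tau i k * E k j) = (if i = j then 1 else 0) \<and>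
            (\<Sum>k\<in>{1..N}. E i k * Dmat N tau k j) = (if i = j then 1 else 0)) \<and>
          infnorm_N N E \<le> b)"

definition mat_infnorm :: "real^'c::finite^'r::finite \<Rightarrow> real" where
  "mat_infnorm M = Max (range (\<lambda>i. \<Sum>j\<in>UNIV. \<bar>M $ i $ j\<bar>))"

definition eigenvalues :: "real^'n::finite^'n \<Rightarrow> real set" where
  "eigenvalues M = {l. \<exists>v. v \<noteq> 0 \<and> M *v v = l *\<^sub>R v}"

definition min_eigenvalue :: "real^'n::finite^'n \<Rightarrow> real" where
  "min_eigenvalue M = Min (eigenvalues M)"

definition block_QSR ::
  "real^'n::finite^'n \<Rightarrow> real^'m::finite^'n \<Rightarrow> real^'m^'m \<Rightarrow> real^('n + 'm)^('n + 'm)" where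
  "block_QSR Q S R = (\<chi> i j. case (i, j) of
       (Inl a, Inl b) \<Rightarrow> Q $ a $ b
     | (Inl a, Inr b) \<Rightarrow> S $ a $ b
     | (Inr a, Inl b) \<Rightarrow> S $ b $ a
     | (Inr a, Inr b) \<Rightarrow> R $ a $ b)"

definition qp_feasible ::
  "nat \<Rightarrow> (nat \<Rightarrow> real) \<Rightarrow> (nat \<Rightarrow> real) \<Rightarrow> (nat \<Rightarrow> real^'n::finite^'n) \<Rightarrow> (nat \<Rightarrow> real^'m::finite^'n)
   \<Rightarrow> (nat \<Rightarrow> real^'n) \<Rightarrow> real^'n \<Rightarrow> (nat \<Rightarrow> real^'n) \<Rightarrow> (nat \<Rightarrow> real^'m) \<Rightarrow> bool" where
  "qp_feasible N tau w A B y1 y2 X U \<longleftrightarrow>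
     (\<forall>i\<in>{1..N}. (\<Sum>j\<in>{1..N}. Dmat N tau i j *\<^sub>R X j) = A i *v X i + B i *v U i + y1 i) \<and>
     X (N + 1) = (\<Sum>j\<in>{1..N}. w j *\<^sub>R (A j *v X j + B j *v U j)) + y2"

definition qp_objective ::
  "nat \<Rightarrow> (nat \<Rightarrow> real) \<Rightarrow> real^'n::finite^'n \<Rightarrow> (nat \<Rightarrow> real^'n^'n) \<Rightarrow> (nat \<Rightarrow> real^'m::finite^'n)
   \<Rightarrow> (nat \<Rightarrow> real^'m^'m) \<Rightarrow> (nat \<Rightarrow> real^'n) \<Rightarrow> real^'n \<Rightarrow> (nat \<Rightarrow> real^'m)
   \<Rightarrow> (nat \<Rightarrow> real^'n) \<Rightarrow> (nat \<Rightarrow> real^'m) \<Rightarrow> real" where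
  "qp_objective N w T Q S R y3 y4 y5 X U =
     (1/2) * (X (N + 1) \<bullet> (T *v X (N + 1)) +
        (\<Sum>i\<in>{1..N}. w i * (X i \<bullet> (Q i *v X i) + 2 * (X i \<bullet> (S i *v U i)) + U i \<bullet> (R i *v U i))))
     + (y4 \<bullet> X (N + 1) - (\<Sum>i\<in>{1..N}. w i * (y3 i \<bullet> X i + y5 i \<bullet> U i)))"

definition Xnorm_w :: "nat \<Rightarrow> (nat \<Rightarrow> real) \<Rightarrow> (nat \<Rightarrow> real^'n::finite) \<Rightarrow> real" where
  "Xnorm_w N w X = sqrt ((norm (X (N + 1)))\<^sup>2 + (\<Sum>i\<in>{1..N}. w i * (norm (X i))\<^sup>2))"

definition Unorm_w :: "nat \<Rightarrow> (nat \<Rightarrow> real) \<Rightarrow> (nat \<Rightarrow> real^'m::finite) \<Rightarrow> real" where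
  "Unorm_w N w U = sqrt (\<Sum>i\<in>{1..N}. w i * (norm (U i))\<^sup>2)"

definition ynorm_inf ::
  "nat \<Rightarrow> (nat \<Rightarrow> real^'n::finite) \<Rightarrow> real^'n \<Rightarrow> (nat \<Rightarrow> real^'n) \<Rightarrow> real^'n \<Rightarrow> (nat \<Rightarrow> real^'m::finite) \<Rightarrow> real" where
  "ynorm_inf N y1 y2 y3 y4 y5 =
     Max ((\<lambda>i. norm (y1 i)) ` {1..N} \<union> {norm y2} \<union> (\<lambda>i. norm (y3 i)) ` {1..N}
          \<union> {norm y4} \<union> (\<lambda>i. norm (y5 i)) ` {1..N})"

end

theory Submission
  imports Defs
begin


lemma leg_deg: "degree (legendre k) \<le> k"
proof (induction k rule: legendre.induct)
  case 1 then show ?case by simp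
next
  case 2 then show ?case by simp
next
  case (3 k)
  have a: "degree ([:0,1:] * legendre (Suc k)) \<le> Suc (Suc k)"
    using degree_mult_le[of "[:0,1:]" "legendre (Suc k)"] 3 by simp
  have "degree (smult (2 * real k + 3) ([:0, 1:] * legendre (Suc k)) - smult (real k + 1) (legendre k)) \<le> Suc (Suc k)"
    using a 3 degree_diff_le by (metis degree_smult_le le_SucI order.trans)
  then show ?case by (simp add: order.trans[OF degree_smult_le])
qed

lemma leg_poly_SS: "poly (legendre (Suc (Suc k))) t =
   ((2 * real k + 3) * t * poly (legendre (Suc k)) t - (real k + 1) * poly (legendre k) t) / (real k + 2)"
  by (simp add: field_simps)

lemma leg_dpoly_SS: "poly (pderiv (legendre (Suc (Suc k)))) t =
   ((2 * real k + 3) * (poly (legendre (Suc k)) t + t * poly (pderiv (legendre (Suc k))) t)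
     - (real k + 1) * poly (pderiv (legendre k)) t) / (real k + 2)"
  by (simp add: pderiv_smult pderiv_diff pderiv_mult pderiv_pCons field_simps)

lemma leg_BC: "t * poly (pderiv (legendre (Suc k))) t - poly (pderiv (legendre k)) t
      = (real k + 1) * poly (legendre (Suc k)) t \<and>
   (t * t - 1) * poly (pderiv (legendre (Suc k))) t
      = (real k + 1) * (t * poly (legendre (Suc k)) t - poly (legendre k) t)"
proof (induction k arbitrary: t)
  case 0 then show ?case by (simp add: pderiv_pCons)
next
  case (Suc k)
  define a where "a = poly (legendre (Suc k)) t"
  define b where "b = poly (legendre k) t"
  define a' where "a' = poly (pderiv (legendre (Suc k))) t"
  define b' where "b' = poly (pderiv (legendre k)) t"
  have B: "t * a' - b' = (real k + 1) * a" and C: "(t*t - 1) * a' = (real k + 1) * (t * a - b)"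
    using Suc[of t] by (auto simp: a_def b_def a'_def b'_def)
  have e1: "poly (legendre (Suc (Suc k))) t = ((2 * real k + 3) * t * a - (real k + 1) * b) / (real k + 2)"
    unfolding a_def b_def by (rule leg_poly_SS)
  have e2: "poly (pderiv (legendre (Suc (Suc k)))) t = ((2 * real k + 3) * (a + t * a') - (real k + 1) * b') / (real k + 2)"
    unfolding a_def b'_def a'_def by (rule leg_dpoly_SS)
  have b'e: "b' = t * a' - (real k + 1) * a" using B by simp
  have k2: "real k + 2 \<noteq> 0" by simp
  have g1: "t * ((2 * real k + 3) * (a + t * a') - (real k + 1) * b') - (real k + 2) * a'
      = (real k + 2) * ((2 * real k + 3) * t * a - (real k + 1) * b)"
  proof -
    have "t * ((2 * real k + 3) * (a + t * a') - (real k + 1) * b') - (real k + 2) * a'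
        = (real k + 2) * ((t*t - 1) * a') + (real k + 2) * (real k + 2) * t * a"
      unfolding b'e by (simp add: algebra_simps)
    also have "\<dots> = (real k + 2) * ((2 * real k + 3) * t * a - (real k + 1) * b)"
      unfolding C by (simp add: algebra_simps)
    finally show ?thesis .
  qed
  have g2: "(t*t - 1) * ((2 * real k + 3) * (a + t * a') - (real k + 1) * b')
     = (real k + 2) * (t * ((2 * real k + 3) * t * a - (real k + 1) * b) - (real k + 2) * a)"
  proof -
    have "(t*t - 1) * ((2 * real k + 3) * (a + t * a') - (real k + 1) * b')
        = (t*t-1) * (real k + 2) * (t * a') + (t*t-1)*(real k + 1)*(real k + 1) * a + (t*t - 1) * (2 * real k + 3) * a"
      unfolding b'e by (simp add: algebra_simps)
    also have "\<dots> = t * (real k + 2) * ((t*t-1) * a') + (t*t-1)*(real k + 1)*(real k + 1) * a + (t*t - 1) * (2 * real k + 3) * a"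
      by (simp add: algebra_simps)
    also have "\<dots> = (real k + 2) * (t * ((2 * real k + 3) * t * a - (real k + 1) * b) - (real k + 2) * a)"
      unfolding C by (simp add: algebra_simps)
    finally show ?thesis .
  qed
  show ?case
    unfolding e1 e2 a_def[symmetric] b_def[symmetric] a'_def[symmetric]
    using g1 g2 k2 by (simp add: field_simps)
qed




definition Jint :: "real poly \<Rightarrow> real" where
  "Jint p = integral {-1..1} (poly p)"

lemma poly_integrable: "poly (p::real poly) integrable_on {a..b::real}"
proof -
  have "continuous_on {a..b} (\<lambda>x. poly p x)" using continuous_on_poly[OF continuous_on_id, of "{a..b}" p] by simp
  then show ?thesis by (simp add: integrable_continuous_interval)
qed

lemma J_add: "Jint (p + q) = Jint p + Jint q"
proof -
  have e: "poly (p+q) = (\<lambda>x. poly p x + poly q x)" by auto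
  show ?thesis unfolding Jint_def e
    by (rule Henstock_Kurzweil_Integration.integral_add) (use poly_integrable[unfolded eta_contract_eq] in auto)
qed

lemma J_diff: "Jint (p - q) = Jint p - Jint q"
proof -
  have e: "poly (p-q) = (\<lambda>x. poly p x - poly q x)" by auto
  show ?thesis unfolding Jint_def e
    by (rule Henstock_Kurzweil_Integration.integral_diff) (use poly_integrable in auto)
qed

lemma J_smult: "Jint (smult c p) = c * Jint p"
proof -
  have e: "poly (smult c p) = (\<lambda>x. c *\<^sub>R poly p x)" by auto
  show ?thesis unfolding Jint_def e integral_cmul by simp
qed

lemma J_0: "Jint 0 = 0"
proof -
  have e: "poly 0 = (\<lambda>x::real. 0::real)" by auto
  show ?thesis unfolding Jint_def e by simp
qed

lemma J_sum: "finite I \<Longrightarrow> Jint (\<Sum>i\<in>I. f i) = (\<Sum>i\<in>I. Jint (f i))"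
  by (induction I rule: finite_induct) (auto simp: J_add J_0)

lemma J_pderiv: "Jint (pderiv p) = poly p 1 - poly p (-1)"
proof -
  have "((poly (pderiv p)) has_integral (poly p 1 - poly p (-1))) {-1..1}"
    apply (rule fundamental_theorem_of_calculus)
     apply simp
    apply (rule has_real_derivative_iff_has_vector_derivative[THEN iffD1])
    apply (rule DERIV_subset[OF poly_DERIV])
    by simp
  then show ?thesis unfolding Jint_def by (rule integral_unique)
qed

lemma J_nonneg: "(\<And>x. x \<in> {-1..1} \<Longrightarrow> 0 \<le> poly p x) \<Longrightarrow> 0 \<le> Jint p"
  unfolding Jint_def by (rule integral_nonneg[OF poly_integrable])

lemma J_ibp: "Jint (pderiv G * q) = poly (G*q) 1 - poly (G*q) (-1) - Jint (G * pderiv q)"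
proof -
  have "Jint (pderiv (G*q)) = Jint (pderiv G * q) + Jint (G * pderiv q)"
    by (simp add: pderiv_mult J_add algebra_simps)
  then show ?thesis using J_pderiv[of "G*q"] by simp
qed

abbreviation "X2m1 \<equiv> [:-1, 0, 1::real:]"

lemma X2m1_poly: "poly X2m1 t = t*t - 1" by simp

lemma leg_B_poly: "[:0,1:] * pderiv (legendre (Suc k)) - pderiv (legendre k)
      = smult (real k + 1) (legendre (Suc k))"
proof -
  have "\<forall>t. poly ([:0,1:] * pderiv (legendre (Suc k)) - pderiv (legendre k)) t
      = poly (smult (real k + 1) (legendre (Suc k))) t"
  proof
    fix t show "poly ([:0,1:] * pderiv (legendre (Suc k)) - pderiv (legendre k)) t
      = poly (smult (real k + 1) (legendre (Suc k))) t"
      using conjunct1[OF leg_BC[of t k]] by simp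
  qed
  then show ?thesis using poly_eq_poly_eq_iff by blast
qed

lemma leg_C_poly: "X2m1 * pderiv (legendre (Suc k))
      = smult (real k + 1) ([:0,1:] * legendre (Suc k) - legendre k)"
proof -
  have "\<forall>t. poly (X2m1 * pderiv (legendre (Suc k))) t
      = poly (smult (real k + 1) ([:0,1:] * legendre (Suc k) - legendre k)) t"
  proof
    fix t show "poly (X2m1 * pderiv (legendre (Suc k))) t
      = poly (smult (real k + 1) ([:0,1:] * legendre (Suc k) - legendre k)) t"
      using conjunct2[OF leg_BC[of t k]] by (simp add: algebra_simps)
  qed
  then show ?thesis using poly_eq_poly_eq_iff by blast
qed

lemma leg_ODE: "pderiv (X2m1 * pderiv (legendre (Suc k)))
      = smult ((real k + 1) * (real k + 2)) (legendre (Suc k))"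
proof -
  have "pderiv (X2m1 * pderiv (legendre (Suc k)))
     = smult (real k + 1) (legendre (Suc k) + ([:0,1:] * pderiv (legendre (Suc k)) - pderiv (legendre k)))"
    unfolding leg_C_poly by (simp add: pderiv_smult pderiv_diff pderiv_mult pderiv_pCons algebra_simps)
  also have "\<dots> = smult ((real k + 1) * (real k + 2)) (legendre (Suc k))"
    unfolding leg_B_poly by (simp add: poly_eq_iff algebra_simps)
  finally show ?thesis .
qed

lemma key_ibp:
  "(real k + 1) * (real k + 2) * Jint (legendre (Suc k) * q)
     = Jint (legendre (Suc k) * pderiv (X2m1 * pderiv q))"
proof -
  define P where "P = legendre (Suc k)"
  define G where "G = X2m1 * pderiv P"
  define H where "H = X2m1 * pderiv q"
  have "(real k + 1) * (real k + 2) * Jint (P * q) = Jint (pderiv G * q)"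
    unfolding G_def P_def leg_ODE by (simp add: J_smult)
  also have "\<dots> = - Jint (G * pderiv q)"
    unfolding J_ibp by (simp add: G_def)
  also have "G * pderiv q = pderiv P * H" by (simp add: G_def H_def algebra_simps)
  also have "Jint (pderiv P * H) = - Jint (P * pderiv H)"
    unfolding J_ibp by (simp add: H_def)
  finally show ?thesis by (simp add: P_def H_def)
qed

lemma L_monom: "pderiv (X2m1 * pderiv ([:0,1:]^j)) =
   smult (real j * (real j + 1)) ([:0,1:]^j) - smult (real j * (real j - 1)) ([:0,1:]^(j-2))"
proof -
  have "\<forall>t. poly (pderiv (X2m1 * pderiv ([:0,1:]^j))) t =
     poly (smult (real j * (real j + 1)) ([:0,1:]^j) - smult (real j * (real j - 1)) ([:0,1:]^(j-2))) t"
  proof (cases j)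
    case 0 then show ?thesis by simp
  next
    case (Suc i) note j = this
    then show ?thesis
    proof (cases i)
      case 0 then show ?thesis using j by (simp add: pderiv_pCons pderiv_mult)
    next
      case (Suc l)
      have d: "\<And>n. pderiv ([:0,1::real:]^Suc n) = smult (real (Suc n)) ([:0,1:]^n)"
        by (simp only: pderiv_power_Suc) (simp add: pderiv_pCons)
      have "pderiv (X2m1 * pderiv ([:0,1:]^j)) = pderiv (X2m1 * smult (real (Suc (Suc l))) ([:0,1:]^Suc l))"
        by (simp only: j Suc d)
      also have "\<dots> = smult (real (Suc (Suc l))) (pderiv X2m1 * [:0,1:]^Suc l + X2m1 * smult (real (Suc l)) ([:0,1:]^l))"
        by (simp only: mult_smult_right pderiv_smult pderiv_mult d) (simp add: algebra_simps)
      finally show ?thesis using j Suc by (simp add: pderiv_pCons algebra_simps power2_eq_square)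

    qed
  qed
  then show ?thesis using poly_eq_poly_eq_iff by blast
qed




lemma orth_monom: "j < Suc k \<Longrightarrow> Jint (legendre (Suc k) * [:0,1:]^j) = 0"
proof (induction j rule: less_induct)
  case (less j)
  define P where "P = legendre (Suc k)"
  define a where "a = real j * (real j + 1)"
  define b where "b = real j * (real j - 1)"
  define KK where "KK = (real k + 1) * (real k + 2)"
  have "KK * Jint (P * [:0,1:]^j) = Jint (P * (smult a ([:0,1:]^j) - smult b ([:0,1:]^(j-2))))"
    unfolding KK_def P_def a_def b_def key_ibp L_monom ..
  also have "\<dots> = a * Jint (P * [:0,1:]^j) - b * Jint (P * [:0,1:]^(j-2))"
    by (simp add: right_diff_distrib J_diff J_smult)
  also have "b * Jint (P * [:0,1:]^(j-2)) = 0"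
  proof (cases "j \<ge> 2")
    case True
    then have "j - 2 < j" by simp
    then show ?thesis using less.IH[of "j-2"] less.prems by (simp add: P_def)
  next
    case False
    then have "j = 0 \<or> j = 1" by auto
    then show ?thesis by (auto simp: b_def)
  qed
  finally have e: "(KK - a) * Jint (P * [:0,1:]^j) = 0" by (simp add: algebra_simps)
  have "j \<le> k" using less.prems by simp
  then have "real j \<le> real k" by simp
  then have "real j * (real j + 1) \<le> real k * (real k + 1)"
    by (intro mult_mono) auto
  moreover have "real k * (real k + 1) < (real k + 1) * (real k + 2)"
    by (simp add: algebra_simps)
  ultimately have "a < KK" unfolding a_def KK_def by linarith
  then show ?case using e by (simp add: P_def)
qed

lemma orth: "degree q < Suc k \<Longrightarrow> Jint (legendre (Suc k) * q) = 0"
proof -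
  assume d: "degree q < Suc k"
  define S where "S = (\<Sum>i\<le>degree q. smult (coeff q i) ([:0,1:]^i))"
  have qS: "q = S" using poly_as_sum_of_monoms[of q] by (simp add: monom_altdef S_def)
  have "legendre (Suc k) * q = legendre (Suc k) * S" using qS by (rule arg_cong)
  also have "\<dots> = (\<Sum>i\<le>degree q. smult (coeff q i) (legendre (Suc k) * [:0,1:]^i))"
    unfolding S_def by (simp add: sum_distrib_left)
  finally have "legendre (Suc k) * q = (\<Sum>i\<le>degree q. smult (coeff q i) (legendre (Suc k) * [:0,1:]^i))" .
  then have "Jint (legendre (Suc k) * q) = (\<Sum>i\<le>degree q. coeff q i * Jint (legendre (Suc k) * [:0,1:]^i))"
    by (simp add: J_sum J_smult)
  also have "\<dots> = 0" using d by (auto intro!: sum.neutral orth_monom)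
  finally show ?thesis .
qed

lemma J_one: "Jint 1 = 2"
  using J_pderiv[of "[:0,1:]"] by (simp add: pderiv_pCons one_pCons)

lemma J_sq: "0 \<le> Jint (p * p)"
  by (rule J_nonneg) simp

definition ell :: "nat \<Rightarrow> (nat \<Rightarrow> real) \<Rightarrow> nat \<Rightarrow> real poly" where
  "ell N tau i = (\<Prod>k\<in>{1..N} - {i}. smult (1 / (tau i - tau k)) [:- tau k, 1:])"

lemma poly_ell: "poly (ell N tau i) t = (\<Prod>k\<in>{1..N} - {i}. (t - tau k) / (tau i - tau k))"
  unfolding ell_def poly_prod by (simp add: diff_divide_distrib)

lemma degree_ell: "i \<in> {1..N} \<Longrightarrow> degree (ell N tau i) \<le> N - 1"
proof -
  assume i: "i \<in> {1..N}"
  have "degree (ell N tau i) \<le> sum (degree \<circ> (\<lambda>k. smult (1 / (tau i - tau k)) [:- tau k, 1:])) ({1..N} - {i})"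
    unfolding ell_def by (rule degree_prod_sum_le) simp
  also have "\<dots> \<le> sum (\<lambda>k. 1) ({1..N} - {i})"
    by (rule sum_mono) (simp add: order.trans[OF degree_smult_le])
  also have "\<dots> \<le> N - 1" using i by simp
  finally show ?thesis .
qed

locale gauss_ctx =
  fixes N :: nat and tau :: "nat \<Rightarrow> real"
  assumes N1: "N \<ge> 1" and gn: "gauss_nodes N tau"
begin

lemma mono: "i \<in> {1..N} \<Longrightarrow> j \<in> {1..N} \<Longrightarrow> i \<noteq> j \<Longrightarrow> tau i \<noteq> tau j"
proof -
  assume i: "i \<in> {1..N}" and j: "j \<in> {1..N}" and ne: "i \<noteq> j"
  have m: "\<And>a b. 1 \<le> a \<Longrightarrow> a < b \<Longrightarrow> b \<le> N \<Longrightarrow> tau a < tau b"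
    using gn unfolding gauss_nodes_def by blast
  show ?thesis
  proof (cases "i < j")
    case True then show ?thesis using m[of i j] i j by force
  next
    case False then have "j < i" using ne by simp
    then show ?thesis using m[of j i] i j by force
  qed
qed

lemma inj: "inj_on tau {1..N}"
  unfolding inj_on_def
proof (intro ballI impI)
  fix x y assume x: "x \<in> {1..N}" and y: "y \<in> {1..N}" and e: "tau x = tau y"
  show "x = y" proof (rule ccontr)
    assume "x \<noteq> y" then show False using mono[OF x y] e by simp
  qed
qed

lemma card_nodes: "card (tau ` {1..N}) = N"
  using card_image[OF inj] by simp

lemma roots: "{x. poly (legendre N) x = 0} = tau ` {1..N}"
  using gn unfolding gauss_nodes_def by simp

lemma P_nz: "legendre N \<noteq> 0"
proof
  assume "legendre N = 0"
  then have "(UNIV :: real set) = tau ` {1..N}" using roots by simp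
  then have "finite (UNIV :: real set)" by (metis finite_atLeastAtMost finite_imageI)
  then show False using infinite_UNIV_char_0[where 'a=real] by blast
qed

lemma P_deg: "degree (legendre N) = N"
proof -
  have "N \<le> degree (legendre N)"
    using card_poly_roots_bound[OF P_nz] roots card_nodes by simp
  then show ?thesis using leg_deg[of N] by simp
qed

lemma vanish: "degree p < N \<Longrightarrow> (\<forall>i\<in>{1..N}. poly p (tau i) = 0) \<Longrightarrow> p = 0"
proof (rule ccontr)
  assume d: "degree p < N" and v: "\<forall>i\<in>{1..N}. poly p (tau i) = 0" and nz: "p \<noteq> 0"
  have "tau ` {1..N} \<subseteq> {x. poly p x = 0}" using v by auto
  then have "card (tau ` {1..N}) \<le> card {x. poly p x = 0}"
    by (rule card_mono[OF poly_roots_finite[OF nz]])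
  then show False using card_poly_roots_bound[OF nz] card_nodes d by simp
qed

lemma ell_node: "i \<in> {1..N} \<Longrightarrow> j \<in> {1..N} \<Longrightarrow> poly (ell N tau i) (tau j) = (if i = j then 1 else 0)"
proof -
  assume i: "i \<in> {1..N}" and j: "j \<in> {1..N}"
  show ?thesis
  proof (cases "i = j")
    case True
    have "\<forall>k\<in>{1..N} - {i}. (tau j - tau k) / (tau i - tau k) = 1"
      using mono i True by auto
    then show ?thesis unfolding poly_ell using True by (simp add: prod.neutral)
  next
    case False
    then have "j \<in> {1..N} - {i}" using j by simp
    then have "\<exists>k\<in>{1..N} - {i}. (tau j - tau k) / (tau i - tau k) = 0" by force
    then show ?thesis unfolding poly_ell using False
      by (simp add: prod_zero)
  qed
qed

lemma ell_sum: "(\<Sum>i\<in>{1..N}. ell N tau i) = 1"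
proof -
  have "(\<Sum>i\<in>{1..N}. ell N tau i) - 1 = 0"
  proof (rule vanish)
    have "degree (\<Sum>i\<in>{1..N}. ell N tau i) \<le> N - 1"
      by (rule degree_sum_le) (use degree_ell in auto)
    then show "degree ((\<Sum>i\<in>{1..N}. ell N tau i) - 1) < N"
    proof -
      have "degree ((\<Sum>i\<in>{1..N}. ell N tau i) - 1) \<le> N - 1"
        by (rule degree_diff_le) (use \<open>degree (\<Sum>i\<in>{1..N}. ell N tau i) \<le> N - 1\<close> in auto)
      then show ?thesis using N1 by simp
    qed
    show "\<forall>j\<in>{1..N}. poly ((\<Sum>i\<in>{1..N}. ell N tau i) - 1) (tau j) = 0"
    proof
      fix j assume j: "j \<in> {1..N}"
      have "(\<Sum>i\<in>{1..N}. poly (ell N tau i) (tau j)) = (\<Sum>i\<in>{1..N}. if i = j then 1 else 0)"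
        by (rule sum.cong) (use j in \<open>auto simp: ell_node\<close>)
      then show "poly ((\<Sum>i\<in>{1..N}. ell N tau i) - 1) (tau j) = 0"
        using j by (simp add: poly_sum)
    qed
  qed
  then show ?thesis by simp
qed

lemma P_node: "i \<in> {1..N} \<Longrightarrow> poly (legendre N) (tau i) = 0"
  using roots by auto

lemma J_ell_sq: "i \<in> {1..N} \<Longrightarrow> Jint (ell N tau i) = Jint (ell N tau i * ell N tau i)"
proof -
  assume i: "i \<in> {1..N}"
  define L where "L = ell N tau i"
  define D where "D = L * L - L"
  define P where "P = legendre N"
  define s where "s = D div P"
  define r where "r = D mod P"
  have Pnz: "P \<noteq> 0" using P_nz P_def by simp
  have Dsr: "D = P * s + r" unfolding s_def r_def using div_mult_mod_eq[of D P] by (simp add: algebra_simps)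
  have r0: "r = 0"
  proof (rule ccontr)
    assume rnz: "r \<noteq> 0"
    have "degree r < N" using degree_mod_less[of P D] Pnz rnz P_deg unfolding r_def P_def by simp
    moreover have "\<forall>j\<in>{1..N}. poly r (tau j) = 0"
    proof
      fix j assume j: "j \<in> {1..N}"
      have "poly D (tau j) = 0" unfolding D_def L_def using ell_node[OF i j] by simp
      moreover have "poly P (tau j) = 0" using P_node[OF j] P_def by simp
      ultimately show "poly r (tau j) = 0" using Dsr by (metis add_0 mult_zero_left poly_add poly_mult)
    qed
    ultimately show False using vanish rnz by blast
  qed
  have ds: "degree s < N"
  proof (cases "s = 0")
    case True then show ?thesis using N1 by simp
  next
    case False
    have "degree D = N + degree s" using Dsr r0 degree_mult_eq[OF Pnz False] P_deg P_def by simp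
    moreover have "degree D \<le> 2 * (N - 1)"
    proof -
      have "degree (L*L) \<le> 2 * (N - 1)" using degree_mult_le[of L L] degree_ell[OF i, of tau] L_def by simp
      moreover have "degree L \<le> 2 * (N-1)" using degree_ell[OF i, of tau] L_def by simp
      ultimately show ?thesis unfolding D_def using degree_diff_le by blast
    qed
    ultimately show ?thesis using N1 by simp
  qed
  obtain k where k: "N = Suc k" using N1 by (cases N) auto
  have "Jint D = Jint (P * s)" using Dsr r0 by simp
  also have "\<dots> = 0" unfolding P_def k by (rule orth) (use ds k in simp)
  finally show ?thesis unfolding D_def L_def J_diff by simp
qed

lemma weights:
  assumes gw: "gauss_weights N tau w"
  shows "(\<forall>i\<in>{1..N}. 0 \<le> w i) \<and> (\<Sum>i\<in>{1..N}. w i) = 2"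
proof -
  have wi: "w i = Jint (ell N tau i)" if i: "i \<in> {1..N}" for i
  proof -
    have e: "poly (ell N tau i) = (\<lambda>t. \<Prod>k\<in>{1..N} - {i}. (t - tau k) / (tau i - tau k))"
      by (rule ext) (simp add: poly_ell)
    show ?thesis using gw i unfolding gauss_weights_def Jint_def e by simp
  qed
  have "\<forall>i\<in>{1..N}. 0 \<le> w i" using wi J_ell_sq J_sq by simp
  moreover have "(\<Sum>i\<in>{1..N}. w i) = Jint (\<Sum>i\<in>{1..N}. ell N tau i)"
    by (simp add: J_sum wi)
  ultimately show ?thesis using ell_sum J_one by simp
qed

end




lemma mv_scaleR: "(M::real^'a::finite^'b::finite) *v (c *\<^sub>R x) = c *\<^sub>R (M *v x)"
  by (simp add: vec_eq_iff matrix_vector_mult_def sum_distrib_left algebra_simps)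

lemma sym_dot: "transpose M = (M::real^'a::finite^'a) \<Longrightarrow> x \<bullet> (M *v y) = y \<bullet> (M *v x)"
proof -
  assume s: "transpose M = M"
  have "x \<bullet> (M *v y) = (x v* M) \<bullet> y" by (simp add: dot_lmul_matrix)
  also have "x v* M = M *v x" using vector_transpose_matrix[of x M] s by simp
  finally show ?thesis by (simp add: inner_commute)
qed

lemma eig_finite:
  fixes M :: "real^'a::finite^'a"
  assumes s: "transpose M = M"
  shows "finite (eigenvalues M)"
proof -
  define E where "E = eigenvalues M"
  define e where "e l = (SOME v. v \<noteq> 0 \<and> M *v v = l *\<^sub>R v)" for l
  have e: "e l \<noteq> 0 \<and> M *v e l = l *\<^sub>R e l" if "l \<in> E" for l
    using that unfolding E_def eigenvalues_def e_def by (metis (mono_tags, lifting) mem_Collect_eq someI_ex)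
  have orth: "e l \<bullet> e m = 0" if "l \<in> E" "m \<in> E" "l \<noteq> m" for l m
  proof -
    have "l * (e m \<bullet> e l) = e m \<bullet> (M *v e l)" using e[OF that(1)] by simp
    also have "\<dots> = e l \<bullet> (M *v e m)" by (rule sym_dot[OF s])
    also have "\<dots> = m * (e l \<bullet> e m)" using e[OF that(2)] by simp
    finally have "(l - m) * (e l \<bullet> e m) = 0" by (simp add: inner_commute algebra_simps)
    then show ?thesis using that(3) by simp
  qed
  have inj: "inj_on e E"
  proof (rule inj_onI)
    fix l m assume l: "l \<in> E" and m: "m \<in> E" and eq: "e l = e m"
    show "l = m"
    proof (rule ccontr)
      assume "l \<noteq> m"
      then have "e l \<bullet> e l = 0" using orth[OF l m] eq by simp
      then show False using e[OF l] by simp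
    qed
  qed
  have "pairwise orthogonal (e ` E)"
    unfolding pairwise_def orthogonal_def using orth by auto
  moreover have "0 \<notin> e ` E" using e by auto
  ultimately have "independent (e ` E)" by (rule pairwise_orthogonal_independent)
  then have "finite (e ` E)" using independent_bound by blast
  then show ?thesis using finite_imageD[OF _ inj] E_def by simp
qed

lemma quad_zero:
  fixes b c :: real
  assumes "\<forall>t. 0 \<le> 2 * t * b + t * t * c"
  shows "b = 0"
proof (rule ccontr)
  assume nz: "b \<noteq> 0"
  define s where "s = \<bar>c\<bar> + 1"
  have s: "s > 0" "\<bar>c\<bar> \<le> s" unfolding s_def by auto
  define t where "t = - b / s"
  have "t * t * c \<le> t * t * \<bar>c\<bar>" by (simp add: mult_left_mono)
  also have "\<dots> \<le> t * t * s" using s by (simp add: mult_left_mono)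
  also have "\<dots> = b * b / s" unfolding t_def using s by (simp add: field_simps)
  finally have h1: "t * t * c \<le> b * b / s" .
  have h2: "2 * t * b = - 2 * (b * b / s)" unfolding t_def by simp
  have "2 * t * b + t * t * c \<le> - b * b / s" using h1 h2 by linarith
  also have "\<dots> < 0"
  proof -
    have "0 < b * b" using nz by (metis not_real_square_gt_zero)
    then have "0 < b * b / s" using s by simp
    then show ?thesis by simp
  qed
  finally show False using assms[rule_format, of t] by linarith
qed

lemma rayleigh:
  fixes M :: "real^'a::finite^'a"
  assumes s: "transpose M = M" and a: "min_eigenvalue M > a"
  shows "a * (norm x)\<^sup>2 \<le> x \<bullet> (M *v x)"
proof -
  define f where "f y = y \<bullet> (M *v y)" for y
  have fsc: "f (c *\<^sub>R y) = c * c * f y" for c y unfolding f_def by (simp add: mv_scaleR)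
  have cont: "continuous_on (sphere 0 1) f"
    unfolding f_def by (intro continuous_intros)
  obtain i :: 'a where True by simp
  have "axis i (1::real) \<in> sphere 0 1" by simp
  then have ne: "sphere (0::real^'a) 1 \<noteq> {}" by blast
  obtain v where v: "v \<in> sphere 0 1" and vmin: "\<forall>y\<in>sphere 0 1. f v \<le> f y"
    using continuous_attains_inf[OF compact_sphere ne cont] by blast
  define l where "l = f v"
  have nv: "norm v = 1" using v by simp
  have hom: "l * (norm z)\<^sup>2 \<le> f z" for z
  proof (cases "z = 0")
    case True then show ?thesis by (simp add: f_def)
  next
    case False
    define y where "y = (1 / norm z) *\<^sub>R z"
    have "y \<in> sphere 0 1" using False by (simp add: y_def)
    then have "l \<le> f y" using vmin l_def by blast
    also have "f y = f z / (norm z)\<^sup>2" unfolding y_def fsc by (simp add: power2_eq_square)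
    finally show ?thesis using False by (simp add: field_simps)
  qed
  define w where "w = M *v v - l *\<^sub>R v"
  have "\<forall>t. 0 \<le> 2 * t * (w \<bullet> w) + t * t * (f w - l * (norm w)\<^sup>2)"
  proof
    fix t
    have h: "l * (norm (v + t *\<^sub>R w))\<^sup>2 \<le> f (v + t *\<^sub>R w)" by (rule hom)
    have e1: "(norm (v + t *\<^sub>R w))\<^sup>2 = 1 + 2 * t * (v \<bullet> w) + t * t * (norm w)\<^sup>2"
      using nv norm_eq_1[of v] by (simp add: power2_norm_eq_inner inner_add_left inner_add_right algebra_simps inner_commute)
    have e2: "f (v + t *\<^sub>R w) = l + 2 * t * (w \<bullet> (M *v v)) + t * t * f w"
      unfolding f_def l_def using sym_dot[OF s, of v w]
      by (simp add: matrix_vector_right_distrib mv_scaleR inner_add_left inner_add_right algebra_simps)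
    have e3: "w \<bullet> w = w \<bullet> (M *v v) - l * (v \<bullet> w)"
      unfolding w_def by (simp add: inner_diff_right inner_commute right_diff_distrib)
    show "0 \<le> 2 * t * (w \<bullet> w) + t * t * (f w - l * (norm w)\<^sup>2)"
      using h unfolding e1 e2 e3 by (simp add: algebra_simps)
  qed
  then have "w \<bullet> w = 0" by (rule quad_zero)
  then have "M *v v = l *\<^sub>R v" unfolding w_def by simp
  moreover have "v \<noteq> 0" using nv by auto
  ultimately have "l \<in> eigenvalues M" unfolding eigenvalues_def by blast
  then have "min_eigenvalue M \<le> l" unfolding min_eigenvalue_def using eig_finite[OF s] by simp
  then have "a \<le> l" using a by simp
  then have "a * (norm x)\<^sup>2 \<le> l * (norm x)\<^sup>2" by (simp add: mult_right_mono)
  also have "\<dots> \<le> f x" by (rule hom)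
  finally show ?thesis by (simp add: f_def)
qed




lemma sum_plus_UNIV:
  "(\<Sum>k\<in>(UNIV::('a::finite + 'b::finite) set). f k) = (\<Sum>a\<in>UNIV. f (Inl a)) + (\<Sum>b\<in>UNIV. f (Inr b))"
proof -
  have "(\<Sum>k\<in>(UNIV::('a + 'b) set). f k) = (\<Sum>k\<in>Inl ` UNIV \<union> Inr ` UNIV. f k)"
    by (simp only: UNIV_sum[symmetric])
  also have "\<dots> = (\<Sum>k\<in>Inl ` (UNIV::'a set). f k) + (\<Sum>k\<in>Inr ` (UNIV::'b set). f k)"
    by (rule sum.union_disjoint) auto
  also have "\<dots> = (\<Sum>a\<in>UNIV. f (Inl a)) + (\<Sum>b\<in>UNIV. f (Inr b))"
    by (simp add: sum.reindex)
  finally show ?thesis .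
qed

definition blkvec :: "real^'n::finite \<Rightarrow> real^'m::finite \<Rightarrow> real^('n + 'm)" where
  "blkvec X U = (\<chi> k. case k of Inl a \<Rightarrow> X $ a | Inr b \<Rightarrow> U $ b)"

lemma blk_norm: "(norm (blkvec X U))\<^sup>2 = (norm X)\<^sup>2 + (norm U)\<^sup>2"
  unfolding power2_norm_eq_inner inner_vec_def
  by (subst sum_plus_UNIV) (simp add: blkvec_def)

lemma sym_comp: "transpose Q = Q \<Longrightarrow> Q $ a $ b = Q $ b $ a"
  by (metis transpose_def vec_lambda_beta)

lemma block_sym:
  assumes "transpose Q = Q" "transpose R = R"
  shows "transpose (block_QSR Q S R) = block_QSR Q S R"
proof -
  have "(transpose (block_QSR Q S R)) $ i $ j = (block_QSR Q S R) $ i $ j" for i j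
    unfolding transpose_def block_QSR_def
    by (cases i; cases j) (auto intro: sym_comp[OF assms(1)] sym_comp[OF assms(2)])
  then show ?thesis by (simp add: vec_eq_iff)
qed

lemma block_quad:
  "blkvec X U \<bullet> (block_QSR Q S R *v blkvec X U) = X \<bullet> (Q *v X) + 2 * (X \<bullet> (S *v U)) + U \<bullet> (R *v U)"
proof -
  have swap: "(\<Sum>a\<in>UNIV. U $ a * (\<Sum>b\<in>UNIV. S $ b $ a * X $ b)) = (\<Sum>a\<in>UNIV. X $ a * (\<Sum>b\<in>UNIV. S $ a $ b * U $ b))"
    by (simp add: sum_distrib_left algebra_simps) (rule sum.swap)
  show ?thesis
    unfolding inner_vec_def matrix_vector_mult_def
    apply (subst sum_plus_UNIV)
    apply (simp add: blkvec_def block_QSR_def sum_plus_UNIV)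
    apply (simp add: distrib_left sum.distrib swap)
    done
qed

lemma row_le: "(\<Sum>j\<in>UNIV. \<bar>M $ i $ j\<bar>) \<le> mat_infnorm (M::real^'c::finite^'r::finite)"
  unfolding mat_infnorm_def by (rule Max_ge) auto

lemma infnorm_nonneg: "0 \<le> mat_infnorm (M::real^'c::finite^'r::finite)"
proof -
  obtain i :: 'r where True by simp
  have "0 \<le> (\<Sum>j\<in>UNIV. \<bar>M $ i $ j\<bar>)" by (rule sum_nonneg) simp
  then show ?thesis using row_le[of M i] by linarith
qed

lemma comp_bound: "\<bar>(M *v x) $ i\<bar> \<le> mat_infnorm (M::real^'c::finite^'r::finite) * norm x"
proof -
  have "\<bar>(M *v x) $ i\<bar> = \<bar>\<Sum>j\<in>UNIV. M $ i $ j * x $ j\<bar>" by (simp add: matrix_vector_mult_def)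
  also have "\<dots> \<le> (\<Sum>j\<in>UNIV. \<bar>M $ i $ j * x $ j\<bar>)" by (rule sum_abs)
  also have "\<dots> \<le> (\<Sum>j\<in>UNIV. \<bar>M $ i $ j\<bar> * norm x)"
    by (rule sum_mono) (simp add: abs_mult mult_left_mono component_le_norm_cart)
  also have "\<dots> = (\<Sum>j\<in>UNIV. \<bar>M $ i $ j\<bar>) * norm x" by (simp add: sum_distrib_right)
  also have "\<dots> \<le> mat_infnorm M * norm x" by (rule mult_right_mono[OF row_le]) simp
  finally show ?thesis .
qed

lemma mv_bound: "norm (M *v x) \<le> real CARD('r) * mat_infnorm (M::real^'c::finite^'r::finite) * norm x"
proof -
  have "norm (M *v x) \<le> (\<Sum>i\<in>UNIV. \<bar>(M *v x) $ i\<bar>)" by (rule norm_le_l1_cart)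
  also have "\<dots> \<le> (\<Sum>i\<in>(UNIV::'r set). mat_infnorm M * norm x)" by (rule sum_mono) (rule comp_bound)
  finally show ?thesis by simp
qed

lemma quad_bound: "\<bar>x \<bullet> (M *v x)\<bar> \<le> real CARD('r) * mat_infnorm (M::real^'r::finite^'r) * (norm x)\<^sup>2"
proof -
  have "\<bar>x \<bullet> (M *v x)\<bar> \<le> norm x * norm (M *v x)" by (rule Cauchy_Schwarz_ineq2)
  also have "\<dots> \<le> norm x * (real CARD('r) * mat_infnorm M * norm x)"
    by (rule mult_left_mono[OF mv_bound]) simp
  finally show ?thesis by (simp add: power2_eq_square algebra_simps)
qed

lemma A_bound:
  fixes A :: "real^'n::finite^'n"
  assumes a1: "mat_infnorm A \<le> 1/4" and a2: "mat_infnorm (transpose A) \<le> 1/4"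
  shows "norm (A *v x) \<le> 1/4 * norm x"
proof -
  have comp: "((A *v x) $ i)\<^sup>2 \<le> 1/4 * (\<Sum>j\<in>UNIV. \<bar>A $ i $ j\<bar> * (x $ j)\<^sup>2)" for i
  proof -
    have "\<bar>(A *v x) $ i\<bar> \<le> (\<Sum>j\<in>UNIV. \<bar>A $ i $ j\<bar> * \<bar>x $ j\<bar>)"
      by (simp add: matrix_vector_mult_def abs_mult[symmetric] sum_abs)
    then have "((A *v x) $ i)\<^sup>2 \<le> (\<Sum>j\<in>UNIV. \<bar>A $ i $ j\<bar> * \<bar>x $ j\<bar>)\<^sup>2"
      by (metis abs_ge_zero power2_abs power_mono)
    also have "(\<Sum>j\<in>UNIV. \<bar>A $ i $ j\<bar> * \<bar>x $ j\<bar>) =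
        (\<Sum>j\<in>UNIV. sqrt \<bar>A $ i $ j\<bar> * (sqrt \<bar>A $ i $ j\<bar> * \<bar>x $ j\<bar>))"
      by (rule sum.cong) (simp_all add: mult.assoc[symmetric])
    also have "(\<dots>)\<^sup>2 \<le> (\<Sum>j\<in>UNIV. (sqrt \<bar>A $ i $ j\<bar>)\<^sup>2) * (\<Sum>j\<in>UNIV. (sqrt \<bar>A $ i $ j\<bar> * \<bar>x $ j\<bar>)\<^sup>2)"
      by (rule Cauchy_Schwarz_ineq_sum)
    also have "\<dots> = (\<Sum>j\<in>UNIV. \<bar>A $ i $ j\<bar>) * (\<Sum>j\<in>UNIV. \<bar>A $ i $ j\<bar> * (x $ j)\<^sup>2)"
      by (simp add: power_mult_distrib)
    also have "\<dots> \<le> 1/4 * (\<Sum>j\<in>UNIV. \<bar>A $ i $ j\<bar> * (x $ j)\<^sup>2)"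
      by (rule mult_right_mono) (use row_le[of A i] a1 in \<open>auto intro: sum_nonneg\<close>)
    finally show ?thesis .
  qed
  have "(norm (A *v x))\<^sup>2 = (\<Sum>i\<in>UNIV. ((A *v x) $ i)\<^sup>2)"
    unfolding power2_norm_eq_inner inner_vec_def by (simp add: power2_eq_square)
  also have "\<dots> \<le> (\<Sum>i\<in>UNIV. 1/4 * (\<Sum>j\<in>UNIV. \<bar>A $ i $ j\<bar> * (x $ j)\<^sup>2))"
    by (rule sum_mono) (rule comp)
  also have "\<dots> = 1/4 * (\<Sum>j\<in>UNIV. (x $ j)\<^sup>2 * (\<Sum>i\<in>UNIV. \<bar>(transpose A) $ j $ i\<bar>))"
    by (simp add: sum_distrib_left transpose_def algebra_simps) (rule sum.swap)
  also have "\<dots> \<le> 1/4 * (\<Sum>j\<in>UNIV. (x $ j)\<^sup>2 * (1/4))"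
  proof -
    have rj: "(\<Sum>i\<in>UNIV. \<bar>(transpose A) $ j $ i\<bar>) \<le> 1/4" for j
      using row_le[of "transpose A" j] a2 by linarith
    have h: "(x $ j)\<^sup>2 * (\<Sum>i\<in>UNIV. \<bar>(transpose A) $ j $ i\<bar>) \<le> (x $ j)\<^sup>2 * (1/4)" for j
      by (rule mult_left_mono[OF rj]) simp
    have "(\<Sum>j\<in>UNIV. (x $ j)\<^sup>2 * (\<Sum>i\<in>UNIV. \<bar>(transpose A) $ j $ i\<bar>)) \<le> (\<Sum>j\<in>UNIV. (x $ j)\<^sup>2 * (1/4))"
      by (rule sum_mono) (rule h)
    then show ?thesis by (rule mult_left_mono) simp
  qed
  also have "\<dots> = (1/4 * norm x)\<^sup>2"
  proof -
    have nx: "(norm x)\<^sup>2 = (\<Sum>j\<in>UNIV. (x $ j)\<^sup>2)"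
      unfolding power2_norm_eq_inner inner_vec_def by (simp add: power2_eq_square)
    show ?thesis unfolding sum_distrib_right[symmetric] power_mult_distrib nx by (simp add: power2_eq_square)
  qed
  finally show ?thesis by (rule power2_le_imp_le) simp
qed




lemma Esum_bound:
  fixes v :: "nat \<Rightarrow> real^'n::finite"
  assumes Eb: "(\<Sum>j\<in>{1..N}. \<bar>E i j\<bar>) \<le> 2"
    and vb: "\<forall>j\<in>{1..N}. norm (v j) \<le> b" and b: "0 \<le> b"
  shows "norm (\<Sum>j\<in>{1..N}. E i j *\<^sub>R v j) \<le> 2 * b"
proof -
  have "norm (\<Sum>j\<in>{1..N}. E i j *\<^sub>R v j) \<le> (\<Sum>j\<in>{1..N}. norm (E i j *\<^sub>R v j))" by (rule norm_sum)
  also have "\<dots> \<le> (\<Sum>j\<in>{1..N}. \<bar>E i j\<bar> * b)"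
    by (rule sum_mono) (use vb in \<open>auto intro: mult_left_mono\<close>)
  also have "\<dots> = (\<Sum>j\<in>{1..N}. \<bar>E i j\<bar>) * b" by (simp add: sum_distrib_right)
  also have "\<dots> \<le> 2 * b" by (rule mult_right_mono[OF Eb b])
  finally show ?thesis .
qed

lemma fixed_point:
  fixes A :: "nat \<Rightarrow> real^'n::finite^'n" and y1 :: "nat \<Rightarrow> real^'n"
    and D E :: "nat \<Rightarrow> nat \<Rightarrow> real"
  assumes Eb: "\<forall>i\<in>{1..N}. (\<Sum>j\<in>{1..N}. \<bar>E i j\<bar>) \<le> 2"
    and DE: "\<forall>i\<in>{1..N}. \<forall>j\<in>{1..N}. (\<Sum>k\<in>{1..N}. D i k * E k j) = (if i = j then 1 else 0)"
    and Ab: "\<forall>j\<in>{1..N}. \<forall>v. norm (A j *v v) \<le> 1/4 * norm v"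
    and yb: "\<forall>j\<in>{1..N}. norm (y1 j) \<le> Y" and Y: "0 \<le> Y"
  shows "\<exists>X. (\<forall>i\<in>{1..N}. (\<Sum>j\<in>{1..N}. D i j *\<^sub>R X j) = A i *v X i + y1 i) \<and>
             (\<forall>i\<in>{1..N}. norm (X i) \<le> 4 * Y)"
proof -
  define \<Phi> where "\<Phi> X = (\<lambda>i. \<Sum>j\<in>{1..N}. E i j *\<^sub>R (A j *v X j + y1 j))" for X :: "nat \<Rightarrow> real^'n"
  define sq where "sq k = (\<Phi> ^^ k) (\<lambda>i. 0)" for k
  have sqS: "sq (Suc k) = \<Phi> (sq k)" for k by (simp add: sq_def)
  have sq0: "sq 0 = (\<lambda>i. 0)" by (simp add: sq_def)
  have bnd: "\<forall>i\<in>{1..N}. norm (sq k i) \<le> 4 * Y" for k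
  proof (induction k)
    case 0 then show ?case using Y by (simp add: sq0)
  next
    case (Suc k)
    show ?case
    proof
      fix i assume i: "i \<in> {1..N}"
      have "\<forall>j\<in>{1..N}. norm (A j *v sq k j + y1 j) \<le> 2 * Y"
      proof
        fix j assume j: "j \<in> {1..N}"
        have "norm (A j *v sq k j + y1 j) \<le> norm (A j *v sq k j) + norm (y1 j)" by (rule norm_triangle_ineq)
        also have "\<dots> \<le> 1/4 * norm (sq k j) + Y" using Ab j yb by (simp add: add_mono)
        also have "\<dots> \<le> 2 * Y"
        proof -
          have "norm (sq k j) \<le> 4 * Y" using Suc.IH j by blast
          then show ?thesis by linarith
        qed
        finally show "norm (A j *v sq k j + y1 j) \<le> 2 * Y" .
      qed
      moreover have Ei: "(\<Sum>j\<in>{1..N}. \<bar>E i j\<bar>) \<le> 2" using Eb i by blast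
      ultimately have "norm (\<Phi> (sq k) i) \<le> 2 * (2 * Y)" unfolding \<Phi>_def
        using Esum_bound[where E=E and i=i and N=N and v="\<lambda>j. A j *v sq k j + y1 j" and b="2*Y", OF Ei] Y by simp
      then show "norm (sq (Suc k) i) \<le> 4 * Y" by (simp add: sqS)
    qed
  qed
  have dec: "\<forall>i\<in>{1..N}. norm (sq (Suc k) i - sq k i) \<le> 2 * Y * (1/2)^k" for k
  proof (induction k)
    case 0
    show ?case
    proof
      fix i assume i: "i \<in> {1..N}"
      have Ei: "(\<Sum>j\<in>{1..N}. \<bar>E i j\<bar>) \<le> 2" using Eb i by blast
      have "norm (\<Sum>j\<in>{1..N}. E i j *\<^sub>R y1 j) \<le> 2 * Y" using Esum_bound[where E=E and i=i and N=N and v=y1 and b=Y, OF Ei] yb Y by simp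
      then show "norm (sq (Suc 0) i - sq 0 i) \<le> 2 * Y * (1/2)^0"
        by (simp add: sqS sq0 \<Phi>_def)
    qed
  next
    case (Suc k)
    show ?case
    proof
      fix i assume i: "i \<in> {1..N}"
      have eq: "sq (Suc (Suc k)) i - sq (Suc k) i = (\<Sum>j\<in>{1..N}. E i j *\<^sub>R (A j *v (sq (Suc k) j - sq k j)))"
        unfolding sqS[of "Suc k"] sqS[of k] \<Phi>_def
        by (simp add: sum_subtractf[symmetric] scaleR_diff_right[symmetric] matrix_vector_mult_diff_distrib)
      have "\<forall>j\<in>{1..N}. norm (A j *v (sq (Suc k) j - sq k j)) \<le> Y * (1/2)^k / 2"
      proof
        fix j assume j: "j \<in> {1..N}"
        have "norm (A j *v (sq (Suc k) j - sq k j)) \<le> 1/4 * norm (sq (Suc k) j - sq k j)" using Ab j by simp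
        also have "\<dots> \<le> 1/4 * (2 * Y * (1/2)^k)"
        proof -
          have "norm (sq (Suc k) j - sq k j) \<le> 2 * Y * (1/2)^k" using Suc.IH j by blast
          then show ?thesis by simp
        qed
        finally show "norm (A j *v (sq (Suc k) j - sq k j)) \<le> Y * (1/2)^k / 2" by simp
      qed
      moreover have Ei: "(\<Sum>j\<in>{1..N}. \<bar>E i j\<bar>) \<le> 2" using Eb i by blast
      ultimately have "norm (sq (Suc (Suc k)) i - sq (Suc k) i) \<le> 2 * (Y * (1/2)^k / 2)"
        unfolding eq using Esum_bound[where E=E and i=i and N=N and v="\<lambda>j. A j *v (sq (Suc k) j - sq k j)" and b="Y * (1/2)^k / 2", OF Ei] Y by simp
      then show "norm (sq (Suc (Suc k)) i - sq (Suc k) i) \<le> 2 * Y * (1/2)^(Suc k)" by simp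
    qed
  qed
  have conv: "\<exists>L. (\<lambda>k. sq k i) \<longlonglongrightarrow> L" if i: "i \<in> {1..N}" for i
  proof -
    define d where "d l = sq (Suc l) i - sq l i" for l
    have "summable (\<lambda>l. 2 * Y * (1/2::real)^l)" by (intro summable_mult summable_geometric) simp
    then have "summable d"
      by (rule summable_comparison_test[rotated]) (use dec i in \<open>auto simp: d_def\<close>)
    then have "(\<lambda>k. \<Sum>l<k. d l) \<longlonglongrightarrow> suminf d" by (rule summable_LIMSEQ)
    moreover have "(\<Sum>l<k. d l) = sq k i" for k
      unfolding d_def using sum_lessThan_telescope[of "\<lambda>l. sq l i" k] by (simp add: sq0)
    ultimately show ?thesis by auto
  qed
  define X where "X i = lim (\<lambda>k. sq k i)" for i
  have lim: "(\<lambda>k. sq k i) \<longlonglongrightarrow> X i" if "i \<in> {1..N}" for i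
    using conv[OF that] unfolding X_def by (auto intro: convergentI convergent_LIMSEQ_iff[THEN iffD1])
  have fix1: "X i = \<Phi> X i" if i: "i \<in> {1..N}" for i
  proof -
    have "(\<lambda>k. \<Phi> (sq k) i) \<longlonglongrightarrow> \<Phi> X i"
      unfolding \<Phi>_def
      by (intro tendsto_intros bounded_linear.tendsto[OF matrix_vector_mul_bounded_linear] lim) auto
    moreover have "(\<lambda>k. \<Phi> (sq k) i) \<longlonglongrightarrow> X i"
      using LIMSEQ_Suc[OF lim[OF i]] by (simp add: sqS)
    ultimately show ?thesis using LIMSEQ_unique by blast
  qed
  have Xb: "\<forall>i\<in>{1..N}. norm (X i) \<le> 4 * Y"
  proof
    fix i assume i: "i \<in> {1..N}"
    show "norm (X i) \<le> 4 * Y"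
      by (rule LIMSEQ_le_const2[OF tendsto_norm[OF lim[OF i]]]) (use bnd i in auto)
  qed
  have feas: "(\<Sum>j\<in>{1..N}. D i j *\<^sub>R X j) = A i *v X i + y1 i" if i: "i \<in> {1..N}" for i
  proof -
    define v where "v j = A j *v X j + y1 j" for j
    have "(\<Sum>j\<in>{1..N}. D i j *\<^sub>R X j) = (\<Sum>j\<in>{1..N}. D i j *\<^sub>R (\<Sum>k\<in>{1..N}. E j k *\<^sub>R v k))"
      by (rule sum.cong) (auto simp: fix1 \<Phi>_def v_def)
    also have "\<dots> = (\<Sum>k\<in>{1..N}. (\<Sum>j\<in>{1..N}. D i j * E j k) *\<^sub>R v k)"
      by (simp add: scaleR_sum_right scaleR_sum_left) (rule sum.swap)
    also have "\<dots> = (\<Sum>k\<in>{1..N}. (if i = k then 1 else 0) *\<^sub>R v k)"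
      by (rule sum.cong) (use DE i in auto)
    also have "\<dots> = (\<Sum>k\<in>{1..N}. if i = k then v k else 0)"
      by (rule sum.cong) auto
    also have "\<dots> = v i" using i by (simp add: sum.delta)
    finally show ?thesis by (simp add: v_def)
  qed
  show ?thesis using feas Xb by blast
qed




lemma lin_aux:
  fixes a b c qT Qs l Ls Z :: real
  assumes "a \<le> qT" "b + c \<le> Qs" "- l \<le> 1/4 * a + Z" "Ls \<le> 1/4 * b + 1/4 * c + 4 * Z"
  shows "1/4 * a + 1/4 * b + 1/4 * c - 5 * Z \<le> 1/2 * (qT + Qs) + (l - Ls)"
  using assms by (simp add: field_simps)

theorem lemma5p1:
  fixes \<alpha> \<beta> :: real
  assumes "\<alpha> > 0" and "\<beta> \<ge> 0"
  shows "\<exists>c::real. \<forall>(N::nat) tau w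
      (A :: nat \<Rightarrow> real^'n::finite^'n) (B :: nat \<Rightarrow> real^'m::finite^'n)
      (Q :: nat \<Rightarrow> real^'n^'n) (S :: nat \<Rightarrow> real^'m^'n) (R :: nat \<Rightarrow> real^'m^'m)
      (T :: real^'n^'n)
      (y1 :: nat \<Rightarrow> real^'n) (y2 :: real^'n) (y3 :: nat \<Rightarrow> real^'n) (y4 :: real^'n)
      (y5 :: nat \<Rightarrow> real^'m) (X :: nat \<Rightarrow> real^'n) (U :: nat \<Rightarrow> real^'m).
     N \<ge> 1 \<longrightarrow> gauss_nodes N tau \<longrightarrow> gauss_weights N tau w \<longrightarrow>
     transpose T = T \<longrightarrow> min_eigenvalue T > \<alpha> \<longrightarrow> mat_infnorm T \<le> \<beta> \<longrightarrow>
     (\<forall>i\<in>{1..N}. transpose (Q i) = Q i \<and> transpose (R i) = R i \<and>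
        min_eigenvalue (block_QSR (Q i) (S i) (R i)) > \<alpha> \<and>
        mat_infnorm (A i) \<le> 1/4 \<and> mat_infnorm (transpose (A i)) \<le> 1/4 \<and>
        mat_infnorm (A i) \<le> \<beta> \<and> mat_infnorm (B i) \<le> \<beta> \<and> mat_infnorm (Q i) \<le> \<beta> \<and>
        mat_infnorm (S i) \<le> \<beta> \<and> mat_infnorm (R i) \<le> \<beta>) \<longrightarrow>
     D_inv_bound N tau 2 \<longrightarrow>
     qp_feasible N tau w A B y1 y2 X U \<longrightarrow>
     (\<forall>X' U'. qp_feasible N tau w A B y1 y2 X' U' \<longrightarrow>
        qp_objective N w T Q S R y3 y4 y5 X U \<le> qp_objective N w T Q S R y3 y4 y5 X' U') \<longrightarrow>
     Xnorm_w N w X \<le> c * ynorm_inf N y1 y2 y3 y4 y5 \<and>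
     Unorm_w N w U \<le> c * ynorm_inf N y1 y2 y3 y4 y5"
proof -
  define nn where "nn = real CARD('n)"
  define C0 where "C0 = 41/2 * nn * \<beta> + 11"
  define K2 where "K2 = 4/\<alpha> * (C0 + 5/\<alpha>)"
  have a0: "\<alpha> > 0" and b0: "\<beta> \<ge> 0" using assms by auto
  have nn0: "nn \<ge> 0" unfolding nn_def by simp
  have C00: "C0 \<ge> 0" unfolding C0_def using nn0 b0 by simp
  have K20: "K2 \<ge> 0" unfolding K2_def using C00 a0 by simp
  show ?thesis
  proof (rule exI[of _ "sqrt K2"], intro allI impI)
    fix N tau w and A :: "nat \<Rightarrow> real^'n^'n" and B :: "nat \<Rightarrow> real^'m^'n"
      and Q :: "nat \<Rightarrow> real^'n^'n" and S :: "nat \<Rightarrow> real^'m^'n" and R :: "nat \<Rightarrow> real^'m^'m"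
      and T :: "real^'n^'n" and y1 :: "nat \<Rightarrow> real^'n" and y2 :: "real^'n" and y3 :: "nat \<Rightarrow> real^'n"
      and y4 :: "real^'n" and y5 :: "nat \<Rightarrow> real^'m" and X :: "nat \<Rightarrow> real^'n" and U :: "nat \<Rightarrow> real^'m"
    assume N1: "N \<ge> 1" and gn: "gauss_nodes N tau" and gw: "gauss_weights N tau w"
      and Ts: "transpose T = T" and Te: "min_eigenvalue T > \<alpha>" and Tn: "mat_infnorm T \<le> \<beta>"
      and H: "\<forall>i\<in>{1..N}. transpose (Q i) = Q i \<and> transpose (R i) = R i \<and>
        min_eigenvalue (block_QSR (Q i) (S i) (R i)) > \<alpha> \<and>
        mat_infnorm (A i) \<le> 1/4 \<and> mat_infnorm (transpose (A i)) \<le> 1/4 \<and>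
        mat_infnorm (A i) \<le> \<beta> \<and> mat_infnorm (B i) \<le> \<beta> \<and> mat_infnorm (Q i) \<le> \<beta> \<and>
        mat_infnorm (S i) \<le> \<beta> \<and> mat_infnorm (R i) \<le> \<beta>"
      and Dinv: "D_inv_bound N tau 2"
      and feasXU: "qp_feasible N tau w A B y1 y2 X U"
      and opt: "\<forall>X' U'. qp_feasible N tau w A B y1 y2 X' U' \<longrightarrow>
        qp_objective N w T Q S R y3 y4 y5 X U \<le> qp_objective N w T Q S R y3 y4 y5 X' U'"
    define Y where "Y = ynorm_inf N y1 y2 y3 y4 y5"
    define Ys where "Ys = (\<lambda>i. norm (y1 i)) ` {1..N} \<union> {norm y2} \<union> (\<lambda>i. norm (y3 i)) ` {1..N}
          \<union> {norm y4} \<union> (\<lambda>i. norm (y5 i)) ` {1..N}"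
    have Yd: "Y = Max Ys" unfolding Y_def Ys_def ynorm_inf_def ..
    have fYs: "finite Ys" unfolding Ys_def by simp
    have Y1: "norm (y1 i) \<le> Y" if "i \<in> {1..N}" for i
      unfolding Yd by (rule Max_ge[OF fYs]) (use that in \<open>auto simp: Ys_def\<close>)
    have Y2: "norm y2 \<le> Y" unfolding Yd by (rule Max_ge[OF fYs]) (auto simp: Ys_def)
    have Y3: "norm (y3 i) \<le> Y" if "i \<in> {1..N}" for i
      unfolding Yd by (rule Max_ge[OF fYs]) (use that in \<open>auto simp: Ys_def\<close>)
    have Y4: "norm y4 \<le> Y" unfolding Yd by (rule Max_ge[OF fYs]) (auto simp: Ys_def)
    have Y5: "norm (y5 i) \<le> Y" if "i \<in> {1..N}" for i
      unfolding Yd by (rule Max_ge[OF fYs]) (use that in \<open>auto simp: Ys_def\<close>)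
    have Y0: "0 \<le> Y" using Y2 norm_ge_zero[of y2] by linarith
    interpret gauss_ctx N tau using N1 gn by unfold_locales
    have wts: "(\<forall>i\<in>{1..N}. 0 \<le> w i) \<and> (\<Sum>i\<in>{1..N}. w i) = 2" by (rule weights[OF gw])
    then have w0: "\<And>i. i \<in> {1..N} \<Longrightarrow> 0 \<le> w i" and wsum: "(\<Sum>i\<in>{1..N}. w i) = 2" by auto
    have Ab: "\<forall>j\<in>{1..N}. \<forall>v. norm (A j *v v) \<le> 1/4 * norm v"
      using H A_bound by blast
    obtain E where DE: "\<forall>i\<in>{1..N}. \<forall>j\<in>{1..N}.
            (\<Sum>k\<in>{1..N}. Dmat N tau i k * E k j) = (if i = j then 1 else 0) \<and>
            (\<Sum>k\<in>{1..N}. E i k * Dmat N tau k j) = (if i = j then 1 else 0)"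
        and En: "infnorm_N N E \<le> 2"
      using Dinv unfolding D_inv_bound_def by blast
    have Eb: "\<forall>i\<in>{1..N}. (\<Sum>j\<in>{1..N}. \<bar>E i j\<bar>) \<le> 2"
    proof
      fix i assume i: "i \<in> {1..N}"
      have "(\<Sum>j\<in>{1..N}. \<bar>E i j\<bar>) \<le> infnorm_N N E"
        unfolding infnorm_N_def by (rule Max_ge) (use i in auto)
      then show "(\<Sum>j\<in>{1..N}. \<bar>E i j\<bar>) \<le> 2" using En by linarith
    qed
    have DE1: "\<forall>i\<in>{1..N}. \<forall>j\<in>{1..N}. (\<Sum>k\<in>{1..N}. Dmat N tau i k * E k j) = (if i = j then 1 else 0)"
      using DE by blast
    obtain Xf where Xf: "\<forall>i\<in>{1..N}. (\<Sum>j\<in>{1..N}. Dmat N tau i j *\<^sub>R Xf j) = A i *v Xf i + y1 i"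
        and Xfb: "\<forall>i\<in>{1..N}. norm (Xf i) \<le> 4 * Y"
      using fixed_point[OF Eb DE1 Ab, of y1 Y] Y1 Y0 by blast
    define XN where "XN = (\<Sum>j\<in>{1..N}. w j *\<^sub>R (A j *v Xf j + B j *v 0)) + y2"
    define X0 where "X0 = (\<lambda>i. if i = N + 1 then XN else Xf i)"
    define U0 where "U0 = (\<lambda>i::nat. 0 :: real^'m)"
    have X0i: "X0 i = Xf i" if "i \<in> {1..N}" for i using that by (simp add: X0_def)
    have feas0: "qp_feasible N tau w A B y1 y2 X0 U0"
      unfolding qp_feasible_def
    proof
      show "\<forall>i\<in>{1..N}. (\<Sum>j\<in>{1..N}. Dmat N tau i j *\<^sub>R X0 j) = A i *v X0 i + B i *v U0 i + y1 i"
      proof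
        fix i assume i: "i \<in> {1..N}"
        have "(\<Sum>j\<in>{1..N}. Dmat N tau i j *\<^sub>R X0 j) = (\<Sum>j\<in>{1..N}. Dmat N tau i j *\<^sub>R Xf j)"
          by (rule sum.cong) (auto simp: X0i)
        then show "(\<Sum>j\<in>{1..N}. Dmat N tau i j *\<^sub>R X0 j) = A i *v X0 i + B i *v U0 i + y1 i"
          using Xf i X0i[OF i] by (simp add: U0_def)
      qed
      have "(\<Sum>j\<in>{1..N}. w j *\<^sub>R (A j *v X0 j + B j *v U0 j)) = (\<Sum>j\<in>{1..N}. w j *\<^sub>R (A j *v Xf j + B j *v 0))"
        by (rule sum.cong) (auto simp: X0i U0_def)
      then show "X0 (N + 1) = (\<Sum>j\<in>{1..N}. w j *\<^sub>R (A j *v X0 j + B j *v U0 j)) + y2"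
        by (simp add: X0_def XN_def)
    qed
    have objle: "qp_objective N w T Q S R y3 y4 y5 X U \<le> qp_objective N w T Q S R y3 y4 y5 X0 U0"
      using opt feas0 by blast
    have X0b: "norm (X0 i) \<le> 4 * Y" if "i \<in> {1..N}" for i
    proof -
      have "norm (Xf i) \<le> 4 * Y" using Xfb that by blast
      then show ?thesis using X0i[OF that] by simp
    qed
    have XNb: "norm XN \<le> 3 * Y"
    proof -
      have "norm (\<Sum>j\<in>{1..N}. w j *\<^sub>R (A j *v Xf j + B j *v 0)) \<le> (\<Sum>j\<in>{1..N}. norm (w j *\<^sub>R (A j *v Xf j)))"
        using norm_sum[of "\<lambda>j. w j *\<^sub>R (A j *v Xf j)" "{1..N}"] by simp
      also have "\<dots> \<le> (\<Sum>j\<in>{1..N}. w j * Y)"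
      proof (rule sum_mono)
        fix j assume j: "j \<in> {1..N}"
        have "norm (A j *v Xf j) \<le> 1/4 * norm (Xf j)" using Ab j by blast
        also have "\<dots> \<le> Y"
        proof -
          have "norm (Xf j) \<le> 4 * Y" using Xfb j by blast
          then show ?thesis by linarith
        qed
        finally show "norm (w j *\<^sub>R (A j *v Xf j)) \<le> w j * Y"
          using w0[OF j] by (simp add: mult_left_mono)
      qed
      also have "\<dots> = 2 * Y" using wsum by (simp add: sum_distrib_right[symmetric])
      finally have "norm (\<Sum>j\<in>{1..N}. w j *\<^sub>R (A j *v Xf j + B j *v 0)) \<le> 2 * Y" .
      then show ?thesis unfolding XN_def using norm_triangle_ineq[of "\<Sum>j\<in>{1..N}. w j *\<^sub>R (A j *v Xf j + B j *v 0)" y2] Y2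
        by linarith
    qed
    have qb: "x \<bullet> (M *v x) \<le> nn * \<beta> * (norm x)\<^sup>2" if "mat_infnorm M \<le> \<beta>" for x and M :: "real^'n^'n"
    proof -
      have "x \<bullet> (M *v x) \<le> \<bar>x \<bullet> (M *v x)\<bar>" by simp
      also have "\<dots> \<le> nn * mat_infnorm M * (norm x)\<^sup>2" unfolding nn_def by (rule quad_bound)
      also have "\<dots> \<le> nn * \<beta> * (norm x)\<^sup>2"
        using that nn0 by (intro mult_right_mono mult_left_mono) auto
      finally show ?thesis .
    qed
    have obj0: "qp_objective N w T Q S R y3 y4 y5 X0 U0 \<le> C0 * Y\<^sup>2"
    proof -
      have t1: "XN \<bullet> (T *v XN) \<le> nn * \<beta> * (9 * Y\<^sup>2)"
      proof -
        have "(norm XN)\<^sup>2 \<le> (3*Y)\<^sup>2" using XNb by (intro power_mono) auto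
        then have "nn * \<beta> * (norm XN)\<^sup>2 \<le> nn * \<beta> * (9 * Y\<^sup>2)"
          using nn0 b0 by (intro mult_left_mono) (auto simp: power_mult_distrib)
        then show ?thesis using qb[OF Tn, of XN] by linarith
      qed
      have t2: "(\<Sum>i\<in>{1..N}. w i * (X0 i \<bullet> (Q i *v X0 i) + 2 * (X0 i \<bullet> (S i *v U0 i)) + U0 i \<bullet> (R i *v U0 i)))
          \<le> (\<Sum>i\<in>{1..N}. w i * (nn * \<beta> * (16 * Y\<^sup>2)))"
      proof (rule sum_mono)
        fix i assume i: "i \<in> {1..N}"
        have "(norm (X0 i))\<^sup>2 \<le> (4*Y)\<^sup>2" using X0b[OF i] by (intro power_mono) auto
        then have "nn * \<beta> * (norm (X0 i))\<^sup>2 \<le> nn * \<beta> * (16 * Y\<^sup>2)"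
          using nn0 b0 by (intro mult_left_mono) (auto simp: power_mult_distrib)
        then have "X0 i \<bullet> (Q i *v X0 i) \<le> nn * \<beta> * (16 * Y\<^sup>2)" using qb[of "Q i" "X0 i"] H i by force
        then show "w i * (X0 i \<bullet> (Q i *v X0 i) + 2 * (X0 i \<bullet> (S i *v U0 i)) + U0 i \<bullet> (R i *v U0 i))
            \<le> w i * (nn * \<beta> * (16 * Y\<^sup>2))"
          using w0[OF i] by (simp add: U0_def mult_left_mono)
      qed
      have t3: "- (\<Sum>i\<in>{1..N}. w i * (y3 i \<bullet> X0 i + y5 i \<bullet> U0 i)) \<le> (\<Sum>i\<in>{1..N}. w i * (4 * Y\<^sup>2))"
      proof -
        have "- (\<Sum>i\<in>{1..N}. w i * (y3 i \<bullet> X0 i + y5 i \<bullet> U0 i)) = (\<Sum>i\<in>{1..N}. w i * (- (y3 i \<bullet> X0 i)))"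
          by (simp add: U0_def sum_negf[symmetric])
        also have "\<dots> \<le> (\<Sum>i\<in>{1..N}. w i * (4 * Y\<^sup>2))"
        proof (rule sum_mono)
          fix i assume i: "i \<in> {1..N}"
          have "- (y3 i \<bullet> X0 i) \<le> norm (y3 i) * norm (X0 i)"
            using Cauchy_Schwarz_ineq2[of "y3 i" "X0 i"] by linarith
          also have "\<dots> \<le> Y * (4 * Y)" using Y3[OF i] X0b[OF i] Y0 by (intro mult_mono) auto
          finally show "w i * (- (y3 i \<bullet> X0 i)) \<le> w i * (4 * Y\<^sup>2)"
            using w0[OF i] by (intro mult_left_mono) (auto simp: power2_eq_square)
        qed
        finally show ?thesis .
      qed
      have t4: "y4 \<bullet> XN \<le> 3 * Y\<^sup>2"
      proof -
        have "y4 \<bullet> XN \<le> norm y4 * norm XN" by (rule norm_cauchy_schwarz)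
        also have "\<dots> \<le> Y * (3 * Y)" using Y4 XNb Y0 by (intro mult_mono) auto
        finally show ?thesis by (simp add: power2_eq_square)
      qed
      have s2: "(\<Sum>i\<in>{1..N}. w i * (nn * \<beta> * (16 * Y\<^sup>2))) = 2 * (nn * \<beta> * (16 * Y\<^sup>2))"
        using wsum by (simp add: sum_distrib_right[symmetric])
      have s3: "(\<Sum>i\<in>{1..N}. w i * (4 * Y\<^sup>2)) = 2 * (4 * Y\<^sup>2)"
        using wsum by (simp add: sum_distrib_right[symmetric])
      have X0N: "X0 (N+1) = XN" by (simp add: X0_def)
      show ?thesis
        unfolding qp_objective_def X0N C0_def
        using t1 t2 t3 t4 s2 s3 by (simp add: algebra_simps)
    qed
    define xa where "xa = norm (X (N+1))"
    define sx where "sx = (\<Sum>i\<in>{1..N}. w i * (norm (X i))\<^sup>2)"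
    define su where "su = (\<Sum>i\<in>{1..N}. w i * (norm (U i))\<^sup>2)"
    define P where "P = xa\<^sup>2 + sx + su"
    have amgm: "Y * t \<le> \<alpha>/4 * t\<^sup>2 + Y\<^sup>2 / \<alpha>" for t
    proof -
      define a where "a = \<alpha>/2 * t"
      have sq: "2 * a * Y \<le> a\<^sup>2 + Y\<^sup>2"
      proof -
        have "0 \<le> (a - Y)\<^sup>2" by simp
        then show ?thesis by (simp add: power2_eq_square algebra_simps)
      qed
      have e1: "\<alpha> * (Y * t) = 2 * a * Y" unfolding a_def by simp
      have e2: "\<alpha> * (\<alpha>/4 * t\<^sup>2 + Y\<^sup>2 / \<alpha>) = a\<^sup>2 + Y\<^sup>2"
        unfolding a_def using a0 by (simp add: power2_eq_square field_simps)
      have "\<alpha> * (Y * t) \<le> \<alpha> * (\<alpha>/4 * t\<^sup>2 + Y\<^sup>2 / \<alpha>)" unfolding e1 e2 by (rule sq)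
      then show ?thesis using a0 by simp
    qed
    have l1: "\<alpha> * xa\<^sup>2 \<le> X (N+1) \<bullet> (T *v X (N+1))" unfolding xa_def by (rule rayleigh[OF Ts Te])
    have l2: "\<alpha> * (sx + su) \<le> (\<Sum>i\<in>{1..N}. w i * (X i \<bullet> (Q i *v X i) + 2 * (X i \<bullet> (S i *v U i)) + U i \<bullet> (R i *v U i)))"
    proof -
      have "\<alpha> * (sx + su) = (\<Sum>i\<in>{1..N}. w i * (\<alpha> * ((norm (X i))\<^sup>2 + (norm (U i))\<^sup>2)))"
        unfolding sx_def su_def by (simp add: sum_distrib_left sum.distrib[symmetric] algebra_simps)
      also have "\<dots> \<le> (\<Sum>i\<in>{1..N}. w i * (X i \<bullet> (Q i *v X i) + 2 * (X i \<bullet> (S i *v U i)) + U i \<bullet> (R i *v U i)))"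
      proof (rule sum_mono)
        fix i assume i: "i \<in> {1..N}"
        have Hi: "transpose (Q i) = Q i" "transpose (R i) = R i" "min_eigenvalue (block_QSR (Q i) (S i) (R i)) > \<alpha>"
          using H i by auto
        have "\<alpha> * (norm (blkvec (X i) (U i)))\<^sup>2 \<le> blkvec (X i) (U i) \<bullet> (block_QSR (Q i) (S i) (R i) *v blkvec (X i) (U i))"
          by (rule rayleigh[OF block_sym[OF Hi(1,2)] Hi(3)])
        then have "\<alpha> * ((norm (X i))\<^sup>2 + (norm (U i))\<^sup>2) \<le> X i \<bullet> (Q i *v X i) + 2 * (X i \<bullet> (S i *v U i)) + U i \<bullet> (R i *v U i)"
          unfolding blk_norm block_quad .
        then show "w i * (\<alpha> * ((norm (X i))\<^sup>2 + (norm (U i))\<^sup>2)) \<le> w i * (X i \<bullet> (Q i *v X i) + 2 * (X i \<bullet> (S i *v U i)) + U i \<bullet> (R i *v U i))"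
          using w0[OF i] by (rule mult_left_mono)
      qed
      finally show ?thesis .
    qed
    have l3: "- (y4 \<bullet> X (N+1)) \<le> \<alpha>/4 * xa\<^sup>2 + Y\<^sup>2 / \<alpha>"
    proof -
      have "- (y4 \<bullet> X (N+1)) \<le> norm y4 * xa" unfolding xa_def using Cauchy_Schwarz_ineq2[of y4 "X (N+1)"] by linarith
      also have "\<dots> \<le> Y * xa" using Y4 by (intro mult_right_mono) (auto simp: xa_def)
      also have "\<dots> \<le> \<alpha>/4 * xa\<^sup>2 + Y\<^sup>2 / \<alpha>" by (rule amgm)
      finally show ?thesis .
    qed
    have l4: "(\<Sum>i\<in>{1..N}. w i * (y3 i \<bullet> X i + y5 i \<bullet> U i)) \<le> \<alpha>/4 * (sx + su) + 4 * Y\<^sup>2 / \<alpha>"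
    proof -
      have "(\<Sum>i\<in>{1..N}. w i * (y3 i \<bullet> X i + y5 i \<bullet> U i))
          \<le> (\<Sum>i\<in>{1..N}. w i * (\<alpha>/4 * (norm (X i))\<^sup>2 + \<alpha>/4 * (norm (U i))\<^sup>2 + 2 * (Y\<^sup>2 / \<alpha>)))"
      proof (rule sum_mono)
        fix i assume i: "i \<in> {1..N}"
        have "y3 i \<bullet> X i \<le> Y * norm (X i)"
          using norm_cauchy_schwarz[of "y3 i" "X i"] Y3[OF i] mult_right_mono[of "norm (y3 i)" Y "norm (X i)"] by simp
        moreover have "y5 i \<bullet> U i \<le> Y * norm (U i)"
          using norm_cauchy_schwarz[of "y5 i" "U i"] Y5[OF i] mult_right_mono[of "norm (y5 i)" Y "norm (U i)"] by simp
        ultimately have "y3 i \<bullet> X i + y5 i \<bullet> U i \<le> \<alpha>/4 * (norm (X i))\<^sup>2 + \<alpha>/4 * (norm (U i))\<^sup>2 + 2 * (Y\<^sup>2 / \<alpha>)"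
          using amgm[of "norm (X i)"] amgm[of "norm (U i)"] by linarith
        then show "w i * (y3 i \<bullet> X i + y5 i \<bullet> U i) \<le> w i * (\<alpha>/4 * (norm (X i))\<^sup>2 + \<alpha>/4 * (norm (U i))\<^sup>2 + 2 * (Y\<^sup>2 / \<alpha>))"
          using w0[OF i] by (rule mult_left_mono)
      qed
      also have "\<dots> = \<alpha>/4 * (sx + su) + 2 * (Y\<^sup>2 / \<alpha>) * (\<Sum>i\<in>{1..N}. w i)"
        unfolding sx_def su_def by (simp add: sum_distrib_left sum_distrib_right sum.distrib sum_divide_distrib algebra_simps)
      also have "\<dots> = \<alpha>/4 * (sx + su) + 4 * Y\<^sup>2 / \<alpha>" using wsum by simp
      finally show ?thesis .
    qed
    have objlow: "\<alpha>/4 * P - 5 * Y\<^sup>2 / \<alpha> \<le> qp_objective N w T Q S R y3 y4 y5 X U"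
    proof -
      define qT where "qT = X (N+1) \<bullet> (T *v X (N+1))"
      define Qs where "Qs = (\<Sum>i\<in>{1..N}. w i * (X i \<bullet> (Q i *v X i) + 2 * (X i \<bullet> (S i *v U i)) + U i \<bullet> (R i *v U i)))"
      define Ls where "Ls = (\<Sum>i\<in>{1..N}. w i * (y3 i \<bullet> X i + y5 i \<bullet> U i))"
      define l where "l = y4 \<bullet> X (N+1)"
      define Z where "Z = Y\<^sup>2 / \<alpha>"
      have ob: "qp_objective N w T Q S R y3 y4 y5 X U = 1/2 * (qT + Qs) + (l - Ls)"
        unfolding qp_objective_def qT_def Qs_def Ls_def l_def ..
      have l1': "\<alpha> * xa\<^sup>2 \<le> qT" using l1 unfolding qT_def .
      have l2': "\<alpha> * sx + \<alpha> * su \<le> Qs" using l2 unfolding Qs_def by (simp add: distrib_left)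
      have l3': "- l \<le> 1/4 * (\<alpha> * xa\<^sup>2) + Z" using l3 unfolding l_def Z_def by simp
      have l4': "Ls \<le> 1/4 * (\<alpha> * sx) + 1/4 * (\<alpha> * su) + 4 * Z"
      proof -
        have "\<alpha>/4 * (sx + su) = 1/4 * (\<alpha> * sx) + 1/4 * (\<alpha> * su)" by (simp add: algebra_simps)
        moreover have "4 * Y\<^sup>2 / \<alpha> = 4 * Z" by (simp add: Z_def)
        ultimately show ?thesis using l4 unfolding Ls_def by linarith
      qed
      have Pe: "\<alpha>/4 * P - 5 * Y\<^sup>2 / \<alpha> = 1/4 * (\<alpha> * xa\<^sup>2) + 1/4 * (\<alpha> * sx) + 1/4 * (\<alpha> * su) - 5 * Z"
        unfolding P_def Z_def by (simp add: algebra_simps)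
      show ?thesis unfolding ob Pe by (rule lin_aux[OF l1' l2' l3' l4'])
    qed
    have "\<alpha>/4 * P \<le> C0 * Y\<^sup>2 + 5 * Y\<^sup>2 / \<alpha>" using objlow objle obj0 by linarith
    then have PK: "P \<le> K2 * Y\<^sup>2" unfolding K2_def using a0 by (simp add: field_simps)
    have sx0: "0 \<le> sx" unfolding sx_def using w0 by (auto intro!: sum_nonneg)
    have su0: "0 \<le> su" unfolding su_def using w0 by (auto intro!: sum_nonneg)
    have cY: "sqrt (K2 * Y\<^sup>2) = sqrt K2 * Y" using Y0 by (simp add: real_sqrt_mult)
    have "Xnorm_w N w X \<le> sqrt K2 * Y"
    proof -
      have "Xnorm_w N w X = sqrt (xa\<^sup>2 + sx)" unfolding Xnorm_w_def xa_def sx_def ..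
      also have "\<dots> \<le> sqrt (K2 * Y\<^sup>2)" using PK su0 unfolding P_def by (intro real_sqrt_le_mono) linarith
      finally show ?thesis using cY by simp
    qed
    moreover have "Unorm_w N w U \<le> sqrt K2 * Y"
    proof -
      have "Unorm_w N w U = sqrt su" unfolding Unorm_w_def su_def ..
      also have "\<dots> \<le> sqrt (K2 * Y\<^sup>2)" using PK sx0 unfolding P_def
        by (intro real_sqrt_le_mono) (use zero_le_power2[of xa] in linarith)
      finally show ?thesis using cY by simp
    qed
    ultimately show "Xnorm_w N w X \<le> sqrt K2 * ynorm_inf N y1 y2 y3 y4 y5 \<and>
       Unorm_w N w U \<le> sqrt K2 * ynorm_inf N y1 y2 y3 y4 y5" unfolding Y_def by simp
  qed
qed


end
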